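(* Let $(G,k)$ be an instance and let $v_1,v_2,v_3,v_4$ be four distinct vertices such that $v_1$ is adjacent to each of $v_2,v_3,v_4$, no two of $v_2,v_3,v_4$ are adjacent, $d(v_1)=3$, and $d(v_4)=1$. Then $(G,k)$ is a yes-instance if and only if $(G-v_4,k)$ is a yes-instance.
   Context: Graphs are undirected, without self-loops, possibly with multi-edges; $d(v)$ is the number of edges incident to $v$ (counted with multiplicity). A vertex set induces a clique if between any two distinct vertices there is exactly one edge, and a tree if it is connected and acyclic (two parallel edges form a cycle). A feasible solution for $(G,k)$ is $X\subseteq V$, $|X|\le k$, with every connected component of $G-X$ a clique or a tree; $(G,k)$ is a yes-instance if one exists. *)

theory Defs
  imports Main
begin

text \<open>A finite multigraph without self-loops: a vertex set V and an edge multiplicity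
function m, where m x y is the number of parallel edges between x and y.\<close>

type_synonym 'a mgraph = "'a set \<times> ('a \<Rightarrow> 'a \<Rightarrow> nat)"

definition verts :: "'a mgraph \<Rightarrow> 'a set" where "verts G = fst G"
definition mult :: "'a mgraph \<Rightarrow> 'a \<Rightarrow> 'a \<Rightarrow> nat" where "mult G = snd G"

definition wf_mgraph :: "'a mgraph \<Rightarrow> bool" where
  "wf_mgraph G \<longleftrightarrow> finite (verts G)
     \<and> (\<forall>x y. mult G x y = mult G y x)
     \<and> (\<forall>x. mult G x x = 0)
     \<and> (\<forall>x y. mult G x y > 0 \<longrightarrow> x \<in> verts G \<and> y \<in> verts G)"

definition adj :: "'a mgraph \<Rightarrow> 'a \<Rightarrow> 'a \<Rightarrow> bool" where
  "adj G x y \<longleftrightarrow> mult G x y > 0"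

definition degree :: "'a mgraph \<Rightarrow> 'a \<Rightarrow> nat" where
  "degree G v = (\<Sum>u\<in>verts G. mult G v u)"

definition del_verts :: "'a mgraph \<Rightarrow> 'a set \<Rightarrow> 'a mgraph" where
  "del_verts G X = (verts G - X, \<lambda>x y. if x \<in> X \<or> y \<in> X then 0 else mult G x y)"

definition is_walk_in :: "'a mgraph \<Rightarrow> 'a set \<Rightarrow> 'a list \<Rightarrow> bool" where
  "is_walk_in G S xs \<longleftrightarrow> xs \<noteq> [] \<and> set xs \<subseteq> S
     \<and> (\<forall>i. Suc i < length xs \<longrightarrow> adj G (xs ! i) (xs ! Suc i))"

definition connected_in :: "'a mgraph \<Rightarrow> 'a set \<Rightarrow> bool" where
  "connected_in G S \<longleftrightarrow> S \<noteq> {} \<and>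
     (\<forall>x\<in>S. \<forall>y\<in>S. \<exists>xs. is_walk_in G S xs \<and> hd xs = x \<and> last xs = y)"

definition has_cycle_in :: "'a mgraph \<Rightarrow> 'a set \<Rightarrow> bool" where
  "has_cycle_in G S \<longleftrightarrow>
     (\<exists>x\<in>S. \<exists>y\<in>S. mult G x y \<ge> 2)
     \<or> (\<exists>xs. is_walk_in G S xs \<and> distinct xs \<and> length xs \<ge> 3 \<and> adj G (last xs) (hd xs))"

definition induces_clique :: "'a mgraph \<Rightarrow> 'a set \<Rightarrow> bool" where
  "induces_clique G S \<longleftrightarrow> (\<forall>x\<in>S. \<forall>y\<in>S. x \<noteq> y \<longrightarrow> mult G x y = 1)"

definition induces_tree :: "'a mgraph \<Rightarrow> 'a set \<Rightarrow> bool" where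
  "induces_tree G S \<longleftrightarrow> connected_in G S \<and> \<not> has_cycle_in G S"

definition is_component :: "'a mgraph \<Rightarrow> 'a set \<Rightarrow> bool" where
  "is_component G C \<longleftrightarrow> C \<subseteq> verts G \<and> connected_in G C
     \<and> (\<forall>D. C \<subseteq> D \<and> D \<subseteq> verts G \<and> connected_in G D \<longrightarrow> D = C)"

definition feasible :: "'a mgraph \<Rightarrow> nat \<Rightarrow> 'a set \<Rightarrow> bool" where
  "feasible G k X \<longleftrightarrow> X \<subseteq> verts G \<and> card X \<le> k
     \<and> (\<forall>C. is_component (del_verts G X) C \<longrightarrow>
            induces_clique (del_verts G X) C \<or> induces_tree (del_verts G X) C)"

definition yes_instance :: "'a mgraph \<Rightarrow> nat \<Rightarrow> bool" where
  "yes_instance G k \<longleftrightarrow> (\<exists>X. feasible G k X)"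

end

theory Submission imports Defs begin


definition stp :: "'a mgraph \<Rightarrow> 'a set \<Rightarrow> 'a \<Rightarrow> 'a \<Rightarrow> bool" where
  "stp H S x y \<longleftrightarrow> x \<in> S \<and> y \<in> S \<and> adj H x y"

lemma walk_rt: "is_walk_in H S xs \<Longrightarrow> (stp H S)\<^sup>*\<^sup>* (hd xs) (last xs)"
proof (induction xs)
  case Nil then show ?case by (simp add: is_walk_in_def)
next
  case (Cons a xs)
  show ?case
  proof (cases "xs = []")
    case True then show ?thesis by simp
  next
    case False
    have "\<forall>i. Suc i < length xs \<longrightarrow> adj H (xs!i) (xs!Suc i)"
    proof (intro allI impI)
      fix i assume "Suc i < length xs"
      then have "Suc (Suc i) < length (a#xs)" by simp
      then have "adj H ((a#xs)!Suc i) ((a#xs)!Suc (Suc i))"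
        using Cons.prems unfolding is_walk_in_def by blast
      then show "adj H (xs!i) (xs!Suc i)" by simp
    qed
    then have w: "is_walk_in H S xs" using Cons.prems False unfolding is_walk_in_def by auto
    have "adj H ((a#xs)!0) ((a#xs)!Suc 0)"
      using Cons.prems False unfolding is_walk_in_def by auto
    then have "adj H a (hd xs)" using False by (simp add: hd_conv_nth)
    moreover have "a \<in> S" "hd xs \<in> S" using Cons.prems False unfolding is_walk_in_def by auto
    ultimately have "stp H S a (hd xs)" by (simp add: stp_def)
    then show ?thesis using Cons.IH[OF w] False
      by (simp add: converse_rtranclp_into_rtranclp)
  qed
qed

lemma rt_walk: "(stp H S)\<^sup>*\<^sup>* x y \<Longrightarrow> x \<in> S \<Longrightarrow> \<exists>xs. is_walk_in H S xs \<and> hd xs = x \<and> last xs = y"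
proof (induction rule: rtranclp_induct)
  case base
  then show ?case by (intro exI[of _ "[x]"]) (simp add: is_walk_in_def)
next
  case (step y z)
  then obtain xs where w: "is_walk_in H S xs" "hd xs = x" "last xs = y" by blast
  have ne: "xs \<noteq> []" using w unfolding is_walk_in_def by simp
  have "is_walk_in H S (xs @ [z])"
    unfolding is_walk_in_def
  proof (intro conjI allI impI)
    show "xs @ [z] \<noteq> []" by simp
    show "set (xs @ [z]) \<subseteq> S" using w step(2) unfolding is_walk_in_def stp_def by auto
    fix i assume i: "Suc i < length (xs @ [z])"
    show "adj H ((xs @ [z]) ! i) ((xs @ [z]) ! Suc i)"
    proof (cases "Suc i < length xs")
      case True then show ?thesis using w(1) by (simp add: nth_append is_walk_in_def)
    next
      case False
      then have si: "Suc i = length xs" using i by simp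
      then have "i = length xs - 1" by simp
      then have "xs!i = last xs" using ne by (simp add: last_conv_nth)
      then show ?thesis using si w(3) step(2) by (simp add: nth_append stp_def)
    qed
  qed
  then show ?case using w ne by (intro exI[of _ "xs @ [z]"]) simp
qed

lemma conn_iff: "connected_in H S \<longleftrightarrow> S \<noteq> {} \<and> (\<forall>x\<in>S. \<forall>y\<in>S. (stp H S)\<^sup>*\<^sup>* x y)"
  unfolding connected_in_def using walk_rt rt_walk by metis

lemma stp_mono: "S \<subseteq> T \<Longrightarrow> (stp H S)\<^sup>*\<^sup>* a b \<Longrightarrow> (stp H T)\<^sup>*\<^sup>* a b"
  by (erule rtranclp_mono[THEN predicate2D, rotated]) (auto simp: stp_def)

lemma agree:
  assumes "\<forall>x\<in>S. \<forall>y\<in>S. mult H1 x y = mult H2 x y"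
  shows "connected_in H1 S = connected_in H2 S" "has_cycle_in H1 S = has_cycle_in H2 S"
    "induces_clique H1 S = induces_clique H2 S" "induces_tree H1 S = induces_tree H2 S"
proof -
  have e: "stp H1 S = stp H2 S" using assms by (auto simp: stp_def adj_def fun_eq_iff)
  show c: "connected_in H1 S = connected_in H2 S" by (simp add: conn_iff e)
  have w: "is_walk_in H1 S xs = is_walk_in H2 S xs" for xs
  proof -
    have "adj H1 (xs!i) (xs!Suc i) = adj H2 (xs!i) (xs!Suc i)" if "set xs \<subseteq> S" "Suc i < length xs" for i
    proof -
      have "xs!i \<in> S" "xs!Suc i \<in> S" using that nth_mem[of i xs] nth_mem[of "Suc i" xs] by auto
      then show ?thesis using assms by (simp add: adj_def)
    qed
    then show ?thesis unfolding is_walk_in_def by blast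
  qed
  have l: "is_walk_in H1 S xs \<Longrightarrow> adj H1 (last xs) (hd xs) = adj H2 (last xs) (hd xs)" for xs
    using assms unfolding is_walk_in_def adj_def
    by (metis hd_in_set last_in_set subsetD)
  have p1: "(\<exists>x\<in>S. \<exists>y\<in>S. 2 \<le> mult H1 x y) = (\<exists>x\<in>S. \<exists>y\<in>S. 2 \<le> mult H2 x y)"
    using assms by auto
  have p2: "(\<exists>xs. is_walk_in H1 S xs \<and> distinct xs \<and> 3 \<le> length xs \<and> adj H1 (last xs) (hd xs))
     = (\<exists>xs. is_walk_in H2 S xs \<and> distinct xs \<and> 3 \<le> length xs \<and> adj H2 (last xs) (hd xs))"
  proof
    assume "\<exists>xs. is_walk_in H1 S xs \<and> distinct xs \<and> 3 \<le> length xs \<and> adj H1 (last xs) (hd xs)"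
    then obtain xs where "is_walk_in H1 S xs" "distinct xs" "3 \<le> length xs" "adj H1 (last xs) (hd xs)" by blast
    then show "\<exists>xs. is_walk_in H2 S xs \<and> distinct xs \<and> 3 \<le> length xs \<and> adj H2 (last xs) (hd xs)"
      using w l by blast
  next
    assume "\<exists>xs. is_walk_in H2 S xs \<and> distinct xs \<and> 3 \<le> length xs \<and> adj H2 (last xs) (hd xs)"
    then obtain xs where a: "is_walk_in H2 S xs" "distinct xs" "3 \<le> length xs" "adj H2 (last xs) (hd xs)" by blast
    then have "is_walk_in H1 S xs" using w by blast
    then show "\<exists>xs. is_walk_in H1 S xs \<and> distinct xs \<and> 3 \<le> length xs \<and> adj H1 (last xs) (hd xs)"
      using a l by blast
  qed
  show h: "has_cycle_in H1 S = has_cycle_in H2 S" unfolding has_cycle_in_def using p1 p2 by simp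
  show "induces_clique H1 S = induces_clique H2 S" using assms unfolding induces_clique_def by auto
  show "induces_tree H1 S = induces_tree H2 S" unfolding induces_tree_def using c h by simp
qed

definition closed :: "'a mgraph \<Rightarrow> 'a set \<Rightarrow> bool" where
  "closed H C \<longleftrightarrow> (\<forall>x\<in>C. \<forall>y\<in>verts H. adj H x y \<longrightarrow> y \<in> C)"

lemma comp_iff:
  assumes sym: "\<forall>x y. mult H x y = mult H y x"
  shows "is_component H C \<longleftrightarrow> C \<subseteq> verts H \<and> connected_in H C \<and> closed H C"
proof
  assume c: "is_component H C"
  have "closed H C" unfolding closed_def
  proof (intro ballI impI)
    fix x y assume x: "x \<in> C" and y: "y \<in> verts H" and a: "adj H x y"
    have "connected_in H (insert y C)" unfolding conn_iff
    proof (intro conjI ballI)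
      show "insert y C \<noteq> {}" by simp
      fix u v assume u: "u \<in> insert y C" and v: "v \<in> insert y C"
      have cc: "\<forall>u\<in>C. \<forall>v\<in>C. (stp H (insert y C))\<^sup>*\<^sup>* u v"
        using c stp_mono[of C "insert y C"] unfolding is_component_def conn_iff by blast
      have s1: "stp H (insert y C) x y" "stp H (insert y C) y x"
        using x a sym by (auto simp: stp_def adj_def)
      show "(stp H (insert y C))\<^sup>*\<^sup>* u v"
        using u v cc s1 x
        by (metis insert_iff rtranclp.rtrancl_refl rtranclp.rtrancl_into_rtrancl converse_rtranclp_into_rtranclp)
    qed
    then have "insert y C = C" using c y unfolding is_component_def by blast
    then show "y \<in> C" by blast
  qed
  then show "C \<subseteq> verts H \<and> connected_in H C \<and> closed H C" using c unfolding is_component_def by blast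
next
  assume a: "C \<subseteq> verts H \<and> connected_in H C \<and> closed H C"
  then obtain x where x: "x \<in> C" unfolding connected_in_def by blast
  have "D = C" if d: "C \<subseteq> D" "D \<subseteq> verts H" "connected_in H D" for D
  proof -
    have "y \<in> C" if y: "y \<in> D" for y
    proof -
      have "(stp H D)\<^sup>*\<^sup>* x y" using d x y unfolding conn_iff by blast
      then show ?thesis
      proof (induction rule: rtranclp_induct)
        case base then show ?case using x .
      next
        case (step u w) then show ?case using a d unfolding closed_def stp_def by blast
      qed
    qed
    then show ?thesis using d by blast
  qed
  then show "is_component H C" using a unfolding is_component_def by blast
qed


lemma conn_insert:
  assumes "connected_in H S" "q \<in> S" "adj H q p" "adj H p q"
  shows "connected_in H (insert p S)"
  unfolding conn_iff
proof (intro conjI ballI)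
  show "insert p S \<noteq> {}" by simp
  fix u v assume u: "u \<in> insert p S" and v: "v \<in> insert p S"
  have cc: "\<forall>u\<in>S. \<forall>v\<in>S. (stp H (insert p S))\<^sup>*\<^sup>* u v"
    using assms(1) stp_mono[of S "insert p S"] unfolding conn_iff by blast
  have s1: "stp H (insert p S) q p" "stp H (insert p S) p q"
    using assms by (auto simp: stp_def)
  show "(stp H (insert p S))\<^sup>*\<^sup>* u v"
    using u v cc s1 assms(2)
    by (metis insert_iff rtranclp.rtrancl_refl rtranclp.rtrancl_into_rtrancl converse_rtranclp_into_rtranclp)
qed

lemma conn_remove:
  assumes c: "connected_in H S" and p: "p \<in> S" and q: "q \<in> S" "q \<noteq> p"
    and nb: "\<forall>y. adj H p y \<longrightarrow> y = q" and sym: "\<forall>x y. mult H x y = mult H y x"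
  shows "connected_in H (S - {p})"
  unfolding conn_iff
proof (intro conjI ballI)
  show "S - {p} \<noteq> {}" using q by blast
  fix x y assume x: "x \<in> S - {p}" and y: "y \<in> S - {p}"
  have r: "(stp H S)\<^sup>*\<^sup>* x y" using c x y unfolding conn_iff by blast
  have "(y \<noteq> p \<longrightarrow> (stp H (S - {p}))\<^sup>*\<^sup>* x y) \<and> (y = p \<longrightarrow> (stp H (S - {p}))\<^sup>*\<^sup>* x q)"
    using r
  proof (induction rule: rtranclp_induct)
    case base then show ?case using x by simp
  next
    case (step y z)
    have a: "adj H y z" "adj H z y" "y \<in> S" "z \<in> S" using step(2) sym by (auto simp: stp_def adj_def)
    show ?case
    proof (cases "z = p")
      case True
      then have "y = q" using nb a by blast
      then show ?thesis using step(3) q True by auto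
    next
      case False
      show ?thesis
      proof (cases "y = p")
        case True
        then have "z = q" using nb a by blast
        then show ?thesis using step(3) True False by auto
      next
        case yF: False
        have "stp H (S - {p}) y z" using a yF False by (simp add: stp_def)
        then show ?thesis using step(3) yF False by (auto intro: rtranclp.rtrancl_into_rtrancl)
      qed
    qed
  qed
  then show "(stp H (S - {p}))\<^sup>*\<^sup>* x y" using y by blast
qed

lemma walk_mono: "is_walk_in H S xs \<Longrightarrow> S \<subseteq> T \<Longrightarrow> is_walk_in H T xs"
  unfolding is_walk_in_def by blast

lemma cyc_mono: "has_cycle_in H S \<Longrightarrow> S \<subseteq> T \<Longrightarrow> has_cycle_in H T"
  unfolding has_cycle_in_def using walk_mono by blast

lemma cyc_adj:
  assumes "is_walk_in H S xs" "adj H (last xs) (hd xs)" "i < length xs"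
  shows "adj H (xs!i) (xs!(if Suc i = length xs then 0 else Suc i))"
proof (cases "Suc i = length xs")
  case True
  have ne: "xs \<noteq> []" using assms by auto
  have "i = length xs - 1" using True by simp
  then have "xs!i = last xs" using ne by (simp add: last_conv_nth)
  moreover have "xs!0 = hd xs" using ne by (simp add: hd_conv_nth)
  ultimately show ?thesis using True assms(2) by simp
next
  case False
  then show ?thesis using assms unfolding is_walk_in_def by simp
qed

lemma acyc_insert:
  assumes nc: "\<not> has_cycle_in H S" and pS: "p \<notin> S"
    and nb: "\<forall>y. adj H p y \<longrightarrow> y = q" and m1: "mult H p q \<le> 1"
    and sym: "\<forall>x y. mult H x y = mult H y x"
  shows "\<not> has_cycle_in H (insert p S)"
proof
  assume "has_cycle_in H (insert p S)"
  then consider (a) x y where "x \<in> insert p S" "y \<in> insert p S" "mult H x y \<ge> 2"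
    | (b) xs where "is_walk_in H (insert p S) xs" "distinct xs" "length xs \<ge> 3" "adj H (last xs) (hd xs)"
    unfolding has_cycle_in_def by blast
  then show False
  proof cases
    case a
    show False
    proof (cases "x = p \<or> y = p")
      case True
      then show False
      proof
        assume "x = p" then show False using a nb m1 by (metis adj_def not_numeral_le_zero one_le_numeral order_trans gr0I le_trans numeral_le_one_iff semiring_norm(69))
      next
        assume "y = p" then show False using a nb m1 sym by (metis adj_def gr0I le_trans not_numeral_le_zero numeral_le_one_iff semiring_norm(69))
      qed
    next
      case False
      then have "x \<in> S" "y \<in> S" using a by auto
      then show False using nc a unfolding has_cycle_in_def by blast
    qed
  next
    case b
    show False
    proof (cases "p \<in> set xs")
      case False
      then have "is_walk_in H S xs" using b unfolding is_walk_in_def by auto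
      then show False using nc b unfolding has_cycle_in_def by blast
    next
      case True
      define n where "n = length xs"
      obtain i where i: "i < n" "xs!i = p" using True n_def by (metis in_set_conv_nth)
      define k where "k = (if Suc i = n then 0 else Suc i)"
      define j where "j = (if i = 0 then n - 1 else i - 1)"
      have k: "k < n" using i b n_def k_def by auto
      have j: "j < n" "(if Suc j = n then 0 else Suc j) = i" using i b n_def j_def by auto
      have "adj H (xs!i) (xs!k)" unfolding k_def n_def
        by (rule cyc_adj[OF b(1) b(4)]) (use i n_def in simp)
      then have xk: "xs!k = q" using nb i by simp
      have "adj H (xs!j) (xs!i)" using cyc_adj[OF b(1) b(4), of j] j n_def by simp
      then have "adj H p (xs!j)" using i sym by (simp add: adj_def)
      then have xj: "xs!j = q" using nb by simp
      have "xs!j = xs!k" using xj xk by simp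
      then have "j = k" using j(1) k b(2) n_def nth_eq_iff_index_eq by blast
      moreover have "j \<noteq> k" using i b n_def j_def k_def by auto
      ultimately show False by simp
    qed
  qed
qed

lemma clique_small_tree:
  assumes "finite S" "card S \<le> 2" "S \<noteq> {}" "induces_clique H S" "\<forall>x. mult H x x = 0"
  shows "induces_tree H S"
  unfolding induces_tree_def
proof
  show "connected_in H S" unfolding conn_iff
  proof (intro conjI ballI)
    show "S \<noteq> {}" using assms by simp
    fix x y assume "x \<in> S" "y \<in> S"
    then show "(stp H S)\<^sup>*\<^sup>* x y" using assms(4)
      by (cases "x = y") (auto simp: induces_clique_def stp_def adj_def)
  qed
  show "\<not> has_cycle_in H S"
  proof
    assume "has_cycle_in H S"
    then consider (a) x y where "x \<in> S" "y \<in> S" "mult H x y \<ge> 2"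
      | (b) xs where "is_walk_in H S xs" "distinct xs" "length xs \<ge> 3"
      unfolding has_cycle_in_def by blast
    then show False
    proof cases
      case a then show False using assms(4,5) unfolding induces_clique_def
        by (cases "x = y") auto
    next
      case b
      have "card (set xs) \<le> card S" using b assms(1) unfolding is_walk_in_def by (simp add: card_mono)
      then show False using b assms(2) by (simp add: distinct_card)
    qed
  qed
qed


locale pend =
  fixes H :: "'a mgraph" and p q :: 'a
  assumes sym: "\<forall>x y. mult H x y = mult H y x"
    and irr: "\<forall>x. mult H x x = 0"
    and inv: "\<forall>x y. adj H x y \<longrightarrow> x \<in> verts H \<and> y \<in> verts H"
    and pV: "p \<in> verts H"
    and nb: "\<forall>y. adj H p y \<longrightarrow> y = q"
    and m1: "mult H p q \<le> 1"
begin

abbreviation "H' \<equiv> del_verts H {p}"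

lemma vH': "verts H' = verts H - {p}" by (simp add: del_verts_def verts_def)
lemma mH': "mult H' x y = (if x = p \<or> y = p then 0 else mult H x y)"
  by (simp add: del_verts_def mult_def)
lemma symH': "\<forall>x y. mult H' x y = mult H' y x" using sym by (simp add: mH')
lemma agr: "p \<notin> S \<Longrightarrow> \<forall>x\<in>S. \<forall>y\<in>S. mult H' x y = mult H x y" by (auto simp: mH')

lemma fwd:
  assumes hyp: "\<forall>C. is_component H C \<longrightarrow> induces_clique H C \<or> induces_tree H C"
    and c': "is_component H' C'"
  shows "induces_clique H' C' \<or> induces_tree H' C'"
proof -
  have c'': "C' \<subseteq> verts H'" "connected_in H' C'" "closed H' C'" using c' comp_iff[OF symH'] by auto
  have pC: "p \<notin> C'" using c'' vH' by auto
  note ag = agree[OF agr[OF pC]]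
  show ?thesis
  proof (cases "q \<in> C' \<and> adj H p q")
    case True
    have qp: "q \<noteq> p" using True irr by (auto simp: adj_def)
    define C where "C = insert p C'"
    have cH: "connected_in H C" unfolding C_def
      using conn_insert[of H C' q p] True c'' ag sym by (simp add: adj_def)
    have clH: "closed H C" unfolding closed_def
    proof (intro ballI impI)
      fix x y assume x: "x \<in> C" and y: "y \<in> verts H" and a: "adj H x y"
      show "y \<in> C"
      proof (cases "x = p")
        case True then show ?thesis using nb a \<open>q \<in> C' \<and> adj H p q\<close> C_def by auto
      next
        case False
        then have xC: "x \<in> C'" using x C_def by auto
        show ?thesis
        proof (cases "y = p")
          case True then show ?thesis using C_def by simp
        next
          case yF: False
          have "adj H' x y" using a False yF by (simp add: adj_def mH')
          moreover have "y \<in> verts H'" using y yF vH' by simp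
          ultimately show ?thesis using c''(3) xC C_def unfolding closed_def by blast
        qed
      qed
    qed
    have "C \<subseteq> verts H" using c''(1) vH' pV C_def by auto
    then have "is_component H C" using cH clH comp_iff[OF sym] by blast
    then have "induces_clique H C \<or> induces_tree H C" using hyp by blast
    then show ?thesis
    proof
      assume "induces_clique H C"
      then have "induces_clique H C'" unfolding induces_clique_def C_def by blast
      then show ?thesis using ag by simp
    next
      assume t: "induces_tree H C"
      have "connected_in H (C - {p})"
        using conn_remove[of H C p q] t True qp nb sym C_def unfolding induces_tree_def by auto
      moreover have "C - {p} = C'" using C_def pC by auto
      moreover have "\<not> has_cycle_in H C'" using t cyc_mono[of H C' C] C_def unfolding induces_tree_def by auto
      ultimately have "induces_tree H C'" unfolding induces_tree_def by simp
      then show ?thesis using ag by simp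
    qed
  next
    case False
    have clH: "closed H C'" unfolding closed_def
    proof (intro ballI impI)
      fix x y assume x: "x \<in> C'" and y: "y \<in> verts H" and a: "adj H x y"
      show "y \<in> C'"
      proof (cases "y = p")
        case True
        then have "adj H p x" using a sym by (simp add: adj_def)
        then have "x = q" using nb by simp
        then show ?thesis using False x \<open>adj H p x\<close> by simp
      next
        case yF: False
        have "adj H' x y" using a pC x yF by (auto simp: adj_def mH')
        moreover have "y \<in> verts H'" using y yF vH' by simp
        ultimately show ?thesis using c''(3) x unfolding closed_def by blast
      qed
    qed
    have "C' \<subseteq> verts H" using c''(1) vH' by auto
    then have "is_component H C'" using clH c'' ag comp_iff[OF sym] by auto
    then show ?thesis using hyp ag by auto
  qed
qed

lemma bwd:
  assumes hyp1: "\<forall>C'. is_component H' C' \<longrightarrow> induces_clique H' C' \<or> induces_tree H' C'"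
    and hyp2: "\<forall>C'. is_component H' C' \<longrightarrow> q \<in> C' \<longrightarrow> adj H p q \<longrightarrow> induces_tree H' C'"
    and c: "is_component H C"
  shows "induces_clique H C \<or> induces_tree H C"
proof -
  have cc: "C \<subseteq> verts H" "connected_in H C" "closed H C" using c comp_iff[OF sym] by auto
  show ?thesis
  proof (cases "p \<in> C")
    case False
    note ag = agree[OF agr[OF False]]
    have "closed H' C" using cc(3) unfolding closed_def by (auto simp: vH' adj_def mH' split: if_splits)
    moreover have "C \<subseteq> verts H'" using cc(1) False vH' by auto
    ultimately have "is_component H' C" using cc ag comp_iff[OF symH'] by auto
    then show ?thesis using hyp1 ag by auto
  next
    case True
    show ?thesis
    proof (cases "adj H p q")
      case False
      have "(stp H C)\<^sup>*\<^sup>* p y \<Longrightarrow> y = p" for y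
      proof (induction rule: rtranclp_induct)
        case base then show ?case by simp
      next
        case (step y z) then show ?case using nb False by (auto simp: stp_def)
      qed
      then have "C = {p}" using cc(2) True unfolding conn_iff by blast
      then show ?thesis by (simp add: induces_clique_def)
    next
      case adjq: True
      have qp: "q \<noteq> p" using adjq irr by (auto simp: adj_def)
      have qC: "q \<in> C" using cc(3) True adjq inv unfolding closed_def by blast
      define C' where "C' = C - {p}"
      have pC: "p \<notin> C'" using C'_def by simp
      note ag = agree[OF agr[OF pC]]
      have "connected_in H C'" using conn_remove[of H C p q] cc True qC qp nb sym C'_def by auto
      then have con': "connected_in H' C'" using ag by simp
      have "closed H' C'" using cc(3) unfolding closed_def C'_def
        by (auto simp: vH' adj_def mH' split: if_splits)
      moreover have "C' \<subseteq> verts H'" using cc(1) vH' C'_def by auto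
      ultimately have "is_component H' C'" using con' comp_iff[OF symH'] by auto
      then have "induces_tree H' C'" using hyp2 qC qp adjq C'_def by auto
      then have t: "induces_tree H C'" using ag by simp
      have "connected_in H (insert p C')"
        using conn_insert[of H C' q p] t qC qp adjq sym C'_def unfolding induces_tree_def by (simp add: adj_def)
      moreover have "\<not> has_cycle_in H (insert p C')"
        using acyc_insert[of H C' p q] t pC nb m1 sym unfolding induces_tree_def by blast
      moreover have "insert p C' = C" using C'_def True by auto
      ultimately show ?thesis unfolding induces_tree_def by auto
    qed
  qed
qed

end



lemma dv_verts[simp]: "verts (del_verts G X) = verts G - X" by (simp add: del_verts_def verts_def)
lemma dv_mult[simp]: "mult (del_verts G X) x y = (if x \<in> X \<or> y \<in> X then 0 else mult G x y)"
  by (simp add: del_verts_def mult_def)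

lemma dv_comm: "del_verts (del_verts G {p}) X = del_verts (del_verts G X) {p}"
  unfolding del_verts_def verts_def mult_def by (auto simp: fun_eq_iff)

lemma dv_in: "p \<in> X \<Longrightarrow> del_verts (del_verts G {p}) (X - {p}) = del_verts G X"
  unfolding del_verts_def verts_def mult_def by (auto simp: fun_eq_iff)

theorem mainTheorem17:
  fixes G :: "'a mgraph" and k :: nat and v1 v2 v3 v4 :: 'a
  assumes "wf_mgraph G"
    and "v1 \<in> verts G" "v2 \<in> verts G" "v3 \<in> verts G" "v4 \<in> verts G"
    and "distinct [v1, v2, v3, v4]"
    and "adj G v1 v2" "adj G v1 v3" "adj G v1 v4"
    and "\<not> adj G v2 v3" "\<not> adj G v2 v4" "\<not> adj G v3 v4"
    and "degree G v1 = 3" "degree G v4 = 1"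
  shows "yes_instance G k \<longleftrightarrow> yes_instance (del_verts G {v4}) k"
proof -
  have fin: "finite (verts G)" and sym: "\<forall>x y. mult G x y = mult G y x"
    and irr: "\<forall>x. mult G x x = 0" and inv: "\<forall>x y. mult G x y > 0 \<longrightarrow> x \<in> verts G \<and> y \<in> verts G"
    using assms(1) unfolding wf_mgraph_def by auto
  have m41: "mult G v4 v1 \<ge> 1" using assms(9) sym by (simp add: adj_def)
  have m4: "mult G v4 y = 0" if "y \<noteq> v1" for y
  proof (rule ccontr)
    assume "mult G v4 y \<noteq> 0"
    then have yV: "y \<in> verts G" using inv by auto
    have "mult G v4 v1 + mult G v4 y = (\<Sum>u\<in>{v1,y}. mult G v4 u)" using that by simp
    also have "\<dots> \<le> degree G v4" unfolding degree_def
      using fin yV assms(2) by (intro sum_mono2) auto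
    finally show False using assms(14) m41 \<open>mult G v4 y \<noteq> 0\<close> by simp
  qed
  have m41': "mult G v4 v1 \<le> 1"
  proof -
    have "(\<Sum>u\<in>{v1}. mult G v4 u) \<le> degree G v4" unfolding degree_def
      using fin assms(2) by (intro sum_mono2) auto
    then show ?thesis using assms(14) by simp
  qed
  have m1: "x \<in> {v2, v3, v4}" if "mult G v1 x > 0" for x
  proof (rule ccontr)
    assume nx: "x \<notin> {v2, v3, v4}"
    have xV: "x \<in> verts G" using inv that by auto
    have xv1: "x \<noteq> v1" using irr that by auto
    define A where "A = {v2, v3, v4, x}"
    have cA: "card A = 4" using assms(6) nx xv1 unfolding A_def by auto
    have "\<forall>u\<in>A. 1 \<le> mult G v1 u" using assms(7,8,9) that unfolding A_def adj_def by auto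
    then have "(\<Sum>u\<in>A. 1) \<le> (\<Sum>u\<in>A. mult G v1 u)" by (intro sum_mono) auto
    also have "\<dots> \<le> degree G v1" unfolding degree_def A_def
      using fin xV assms(3,4,5) by (intro sum_mono2) auto
    finally show False using cA assms(13) by simp
  qed
  have pendX: "pend (del_verts G X) v4 v1" if X: "v4 \<notin> X" for X
  proof
    show "\<forall>x y. mult (del_verts G X) x y = mult (del_verts G X) y x" using sym by simp
    show "\<forall>x. mult (del_verts G X) x x = 0" using irr by simp
    show "\<forall>x y. adj (del_verts G X) x y \<longrightarrow> x \<in> verts (del_verts G X) \<and> y \<in> verts (del_verts G X)"
      using inv by (auto simp: adj_def split: if_splits)
    show "v4 \<in> verts (del_verts G X)" using X assms(5) by simp
    show "\<forall>y. adj (del_verts G X) v4 y \<longrightarrow> y = v1"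
    proof (intro allI impI)
      fix y assume "adj (del_verts G X) v4 y"
      then have "mult G v4 y > 0" by (simp add: adj_def split: if_splits)
      then show "y = v1" using m4[of y] by (cases "y = v1") auto
    qed
    show "mult (del_verts G X) v4 v1 \<le> 1" using m41' by simp
  qed
  show ?thesis
  proof
    assume "yes_instance G k"
    then obtain X where f: "feasible G k X" unfolding yes_instance_def by blast
    have finX: "finite X" using f fin unfolding feasible_def by (auto intro: finite_subset)
    show "yes_instance (del_verts G {v4}) k"
    proof (cases "v4 \<in> X")
      case True
      have "feasible (del_verts G {v4}) k (X - {v4})"
        using f card_Diff1_le[of X v4] finX unfolding feasible_def dv_in[OF True] by auto
      then show ?thesis unfolding yes_instance_def by blast
    next
      case False
      interpret P: pend "del_verts G X" v4 v1 using pendX[OF False] .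
      have "feasible (del_verts G {v4}) k X"
        using f False P.fwd unfolding feasible_def dv_comm by auto
      then show ?thesis unfolding yes_instance_def by blast
    qed
  next
    assume "yes_instance (del_verts G {v4}) k"
    then obtain X where f: "feasible (del_verts G {v4}) k X" unfolding yes_instance_def by blast
    have X: "v4 \<notin> X" "X \<subseteq> verts G" using f unfolding feasible_def by auto
    interpret P: pend "del_verts G X" v4 v1 using pendX[OF X(1)] .
    have hyp1: "\<forall>C'. is_component P.H' C' \<longrightarrow> induces_clique P.H' C' \<or> induces_tree P.H' C'"
      using f unfolding feasible_def dv_comm by auto
    have hyp2: "\<forall>C'. is_component P.H' C' \<longrightarrow> v1 \<in> C' \<longrightarrow> adj (del_verts G X) v4 v1 \<longrightarrow> induces_tree P.H' C'"
    proof (intro allI impI)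
      fix C' assume c: "is_component P.H' C'" and v1C: "v1 \<in> C'" and a: "adj (del_verts G X) v4 v1"
      show "induces_tree P.H' C'"
      proof (cases "induces_clique P.H' C'")
        case False then show ?thesis using hyp1 c by blast
      next
        case True
        have sub: "C' \<subseteq> verts G - X - {v4}" using c unfolding is_component_def by auto
        have nb: "x \<in> {v2, v3}" if "x \<in> C'" "x \<noteq> v1" for x
        proof -
          have "v1 \<noteq> x" using that by auto
          then have "mult P.H' v1 x = 1" using True that(1) v1C unfolding induces_clique_def by blast
          then have "mult G v1 x > 0" by (simp split: if_splits)
          then show ?thesis using m1 that sub by auto
        qed
        have n23: "\<not> (v2 \<in> C' \<and> v3 \<in> C')"
        proof
          assume h: "v2 \<in> C' \<and> v3 \<in> C'"
          have "v2 \<noteq> v3" using assms(6) by auto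
          then have "mult P.H' v2 v3 = 1" using True h unfolding induces_clique_def by blast
          then have "mult G v2 v3 > 0" by (simp split: if_splits)
          then show False using assms(10) by (simp add: adj_def)
        qed
        have "C' \<subseteq> {v1, v2} \<or> C' \<subseteq> {v1, v3}" using nb n23 by blast
        then have "card C' \<le> 2"
        proof
          assume "C' \<subseteq> {v1, v2}"
          then have "card C' \<le> card {v1, v2}" by (intro card_mono) auto
          also have "\<dots> \<le> 2" by (simp add: card_insert_if)
          finally show ?thesis .
        next
          assume "C' \<subseteq> {v1, v3}"
          then have "card C' \<le> card {v1, v3}" by (intro card_mono) auto
          also have "\<dots> \<le> 2" by (simp add: card_insert_if)
          finally show ?thesis .
        qed
        moreover have "finite C'" using sub fin by (auto intro: finite_subset)
        moreover have "\<forall>x. mult P.H' x x = 0" using irr by simp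
        moreover have "C' \<noteq> {}" using v1C by blast
        ultimately show ?thesis using clique_small_tree[of C' P.H'] True by blast
      qed
    qed
    have "feasible G k X"
      using f X P.bwd[OF hyp1 hyp2] unfolding feasible_def by auto
    then show "yes_instance G k" unfolding yes_instance_def by blast
  qed
qed

end
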